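(* Let $n \ge 4$ be even, let $s = n/2$ and $m = n/s = 2$. There exists a nonsingular matrix $A \in \mathbb{Q}^{n\times n}$ with $n$ distinct eigenvalues such that for every $v \in \mathbb{Q}^{n\times s}$ of the block-diagonal sparse form $$v = \begin{bmatrix} \ast & & & \\ & \ast & & \\ & & \ddots & \\ & & & \ast \end{bmatrix},$$ where each $\ast$ is an arbitrary $m\times 1 = 2\times 1$ column and all other entries are zero, the matrix $\mathcal{K}(A,v)$ is singular. For instance, for $n=4$ one may take $$A = \begin{bmatrix} 3&0&0&0\\ 0&5&-1&0\\ 0&4&10&0\\ 0&0&0&12\end{bmatrix},$$ for which $\mathcal{K}(A,v)$ is singular for all $v = \begin{bmatrix} a_1 & 0\\ a_2 & 0\\ 0 & b_1\\ 0 & b_2\end{bmatrix}$.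
   Context: For a field $F$, a matrix $A \in F^{n\times n}$, a divisor $s$ of $n$ and $m = n/s$, and a block $v \in F^{n\times s}$, define the block Krylov matrix $\mathcal{K}(A,v) := [\, v \mid Av \mid A^2 v \mid \cdots \mid A^{m-1}v \,] \in F^{n\times n}$. *)

theory Defs
  imports "Jordan_Normal_Form.Char_Poly"
begin

definition block_krylov :: "'a :: comm_ring_1 mat \<Rightarrow> 'a mat \<Rightarrow> 'a mat" where
  "block_krylov A v =
     mat (dim_row A) (dim_row A)
       (\<lambda>(i, j). ((A ^\<^sub>m (j div dim_col v)) * v) $$ (i, j mod dim_col v))"

definition block_diag_sparse :: "nat \<Rightarrow> 'a :: zero mat \<Rightarrow> bool" where
  "block_diag_sparse m v \<longleftrightarrow>
     (\<forall>i < dim_row v. \<forall>j < dim_col v. i div m \<noteq> j \<longrightarrow> v $$ (i, j) = 0)"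

end

theory Submission
  imports Defs
begin

definition dd :: "nat \<Rightarrow> 'a::field_char_0" where
  "dd i = (if i = 0 then 3 else if i = 1 then 5 else if i = 2 then 10 else if i = 3 then 12 else of_nat i + 100)"

definition Am :: "nat \<Rightarrow> 'a::field_char_0 mat" where
  "Am n = mat n n (\<lambda>(i,j). (if j = i then dd i else 0) + (if i = 1 \<and> j = 2 then -1 else 0)
      + (if i = 2 \<and> j = 1 then 4 else 0))"

lemma Am_carrier: "Am n \<in> carrier_mat n n" by (simp add: Am_def)

lemma Am_entry: "i < n \<Longrightarrow> j < n \<Longrightarrow> Am n $$ (i,j) = (if j = i then dd i else 0) + (if i = 1 \<and> j = 2 then -1 else 0)
      + (if i = 2 \<and> j = 1 then 4 else 0)" by (simp add: Am_def)

lemma Am_mult_vec: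
  assumes "n \<ge> 4" "i < n" "v \<in> carrier_vec n"
  shows "(Am n *\<^sub>v v) $ i = dd i * v$i + (if i = 1 then - v$2 else 0) + (if i = 2 then 4 * v$1 else 0)"
proof -
  have "(Am n *\<^sub>v v) $ i = (\<Sum>j\<in>{0..<n}. Am n $$ (i,j) * v $ j)"
    using assms by (simp add: Am_def mult_mat_vec_def scalar_prod_def)
  also have "\<dots> = (\<Sum>j\<in>{0..<n}. (if j = i then dd i * v$j else 0) + (if i = 1 \<and> j = 2 then - v$j else 0)
      + (if i = 2 \<and> j = 1 then 4 * v$j else 0))"
    by (rule sum.cong) (use assms in \<open>auto simp: Am_entry algebra_simps\<close>)
  also have "\<dots> = dd i * v$i + (if i = 1 then - v$2 else 0) + (if i = 2 then 4 * v$1 else 0)"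
    using assms by (simp add: sum.distrib)
  finally show ?thesis .
qed

definition S :: "nat \<Rightarrow> 'a::field_char_0 set" where
  "S n = {3,6,9,12} \<union> (\<lambda>i. of_nat i + 100) ` {4..<n}"

lemma eig_in:
  assumes n: "n \<ge> 4" and v: "v \<in> carrier_vec n" and nz: "v \<noteq> 0\<^sub>v n"
    and ev: "Am n *\<^sub>v v = k \<cdot>\<^sub>v (v :: 'a::field_char_0 vec)"
  shows "k \<in> S n"
proof -
  have eq: "dd i * v$i + (if i = 1 then - v$2 else 0) + (if i = 2 then 4 * v$1 else 0) = k * v$i"
    if "i < n" for i
    using Am_mult_vec[OF n that v] ev that v
    by (metis index_smult_vec(1) carrier_vecD)
  obtain i where i: "i < n" "v$i \<noteq> 0"
    using nz v by (metis carrier_vecD eq_vecI index_zero_vec(1) index_zero_vec(2))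
  show ?thesis
  proof (cases "i = 1 \<or> i = 2")
    case True
    have e1: "5 * v$1 - v$2 = k * v$1" using eq[of 1] n by (simp add: dd_def)
    have e2: "10 * v$2 + 4 * v$1 = k * v$2" using eq[of 2] n by (simp add: dd_def)
    have v2: "v$2 = (5 - k) * v$1" using e1 by (simp add: algebra_simps)
    have v1: "v$1 \<noteq> 0" using True i v2 by auto
    have "v$1 * ((k - 6) * (k - 9)) = 0" using e2 unfolding v2 by (simp add: algebra_simps)
    then have "k = 6 \<or> k = 9" using v1 by auto
    then show ?thesis by (auto simp: S_def)
  next
    case False
    then have "dd i * v$i = k * v$i" using eq[OF i(1)] by simp
    then have "k = dd i" using i(2) by simp
    then show ?thesis using False i(1) by (auto simp: S_def dd_def)
  qed
qed

lemma eig_ex: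
  assumes n: "n \<ge> 4" and k: "(k::'a::field_char_0) \<in> S n"
  shows "eigenvalue (Am n) k"
proof -
  have ev: "eigenvalue (Am n) k" if "v \<in> carrier_vec n" "v $ 0 \<noteq> 0 \<or> v $ 1 \<noteq> 0 \<or> v$i \<noteq> 0"
    "\<And>i. i < n \<Longrightarrow> dd i * v$i + (if i = 1 then - v$2 else 0) + (if i = 2 then 4 * v$1 else 0) = k * v$i"
    "i < n"
    for v i
  proof -
    have "Am n *\<^sub>v v = k \<cdot>\<^sub>v v"
      by (rule eq_vecI) (use that Am_mult_vec[OF n _ that(1)] Am_carrier[of n] in auto)
    moreover have "v \<noteq> 0\<^sub>v n" using that n by auto
    moreover have dr: "dim_row (Am n) = n" by (simp add: Am_def)
    ultimately show ?thesis using that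
      unfolding eigenvalue_def eigenvector_def dr by blast
  qed
  show ?thesis
  proof -
    consider "k = 3" | "k = 6" | "k = 9" | "k = 12" | i where "i \<in> {4..<n}" "k = of_nat i + 100"
      using k unfolding S_def by auto
    then show ?thesis
    proof cases
      case 1
      show ?thesis by (rule ev[of "unit_vec n 0" 0]) (use n 1 in \<open>auto simp: dd_def\<close>)
    next
      case 2
      show ?thesis by (rule ev[of "vec n (\<lambda>j. if j = 1 then 1 else if j = 2 then -1 else 0)" 0]) (use n 2 in \<open>auto simp: dd_def\<close>)
    next
      case 3
      show ?thesis by (rule ev[of "vec n (\<lambda>j. if j = 1 then 1 else if j = 2 then -4 else 0)" 0]) (use n 3 in \<open>auto simp: dd_def\<close>)
    next
      case 4
      show ?thesis by (rule ev[of "unit_vec n 3" 3]) (use n 4 in \<open>auto simp: dd_def\<close>)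
    next
      case (5 i)
      show ?thesis by (rule ev[of "unit_vec n i" i]) (use n 5 in \<open>auto simp: dd_def\<close>)
    qed
  qed
qed

lemma card_S: assumes "n \<ge> 4" shows "card (S n :: 'a::field_char_0 set) = n"
proof -
  have inj: "inj_on (\<lambda>i. of_nat i + (100::'a)) {4..<n}" by (auto simp: inj_on_def)
  have d: "{3,6,9,12} \<inter> (\<lambda>i. of_nat i + (100::'a)) ` {4..<n} = {}"
  proof -
    have "of_nat i + (100::'a) \<noteq> of_nat j" if "j < 13" for i j
    proof
      assume "of_nat i + (100::'a) = of_nat j"
      then have "of_nat (i + 100) = (of_nat j :: 'a)" by simp
      then have "i + 100 = j" by (metis of_nat_eq_iff)
      then show False using that by simp
    qed
    from this[of 3 _] this[of 6] this[of 9] this[of 12] show ?thesis by auto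
  qed
  have c4: "card {3,6,9,12::'a} = 4"
  proof -
    have "(3::'a) \<noteq> 6" "(3::'a) \<noteq> 9" "(3::'a) \<noteq> 12" "(6::'a) \<noteq> 9" "(6::'a) \<noteq> 12" "(9::'a) \<noteq> 12"
      by simp_all
    then show ?thesis by simp
  qed
  show ?thesis unfolding S_def
    using card_Un_disjoint[OF _ _ d] c4 card_image[OF inj] assms by simp
qed


lemma Am_dims[simp]: "dim_row (Am n) = n" "dim_col (Am n) = n" by (simp_all add: Am_def)

lemma Am_mult_mat:
  assumes n: "n \<ge> 4" "i < n" "v \<in> carrier_mat n s" "j < s"
  shows "(Am n * v) $$ (i,j) = dd i * v$$(i,j) + (if i = 1 then - v$$(2,j) else 0) + (if i = 2 then 4 * v$$(1,j) else 0)"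
proof -
  have "(Am n * v) $$ (i,j) = (Am n *\<^sub>v col v j) $ i"
    using assms Am_carrier[of n] by (simp add: mult_mat_vec_def)
  also have "\<dots> = dd i * (col v j)$i + (if i = 1 then - (col v j)$2 else 0) + (if i = 2 then 4 * (col v j)$1 else 0)"
    by (rule Am_mult_vec) (use assms in auto)
  finally show ?thesis using assms by simp
qed

lemma krylov_sing:
  assumes ev: "even n" and n: "n \<ge> 4" and v: "v \<in> carrier_mat n (n div 2)"
    and bd: "block_diag_sparse 2 v"
  shows "det (block_krylov (Am n :: rat mat) v) = 0"
proof -
  define s where "s = n div 2"
  have ns: "n = s + s" "s \<ge> 2" using ev n unfolding s_def by auto
  define K where "K = block_krylov (Am n :: rat mat) v"
  have Kc: "K \<in> carrier_mat n n" unfolding K_def block_krylov_def using Am_carrier[of n] by simp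
  have dcv: "dim_col v = s" using v s_def by simp
  have K1: "K $$ (i,j) = v $$ (i,j)" if "i < n" "j < s" for i j
    using that Am_carrier[of n] v ns unfolding K_def block_krylov_def dcv by simp
  have K2: "K $$ (i,s+j) = (Am n * v) $$ (i,j)" if "i < n" "j < s" for i j
  proof -
    have "(s + j) div s = 1" "(s+j) mod s = j" using that ns by auto
    then show ?thesis using that Am_carrier[of n] v ns unfolding K_def block_krylov_def dcv by simp
  qed
  have vz: "v $$ (i,j) = 0" if "i < n" "j < s" "i div 2 \<noteq> j" for i j
    using bd that v unfolding block_diag_sparse_def s_def by auto
  define a2 where "a2 = v $$ (1,0)"
  define b1 where "b1 = v $$ (2,1)"
  define x where "x = (if a2 = 0 \<and> b1 = 0 then (-3) \<cdot>\<^sub>v unit_vec n 0 + unit_vec n s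
     else ((-3 * b1) \<cdot>\<^sub>v unit_vec n 0 + (-24 * a2) \<cdot>\<^sub>v unit_vec n 1) + (b1 \<cdot>\<^sub>v unit_vec n s + (2 * a2) \<cdot>\<^sub>v unit_vec n (s+1)))"
  have xc: "x \<in> carrier_vec n" unfolding x_def by auto
  have xnz: "x \<noteq> 0\<^sub>v n"
  proof
    assume "x = 0\<^sub>v n"
    then have "x $ s = 0" "x $ (s+1) = 0" using ns by auto
    then show False unfolding x_def using ns by (auto split: if_splits)
  qed
  have colK: "(K *\<^sub>v unit_vec n j) $ i = K $$ (i,j)" if "i < n" "j < n" for i j
    using that Kc by (simp add: mult_mat_vec_def row_def)
  define c0 where "c0 = x $ 0"
  define c1 where "c1 = x $ 1"
  define c2 where "c2 = x $ s"
  define c3 where "c3 = x $ (s+1)"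
  have Kxv: "K *\<^sub>v x = (if a2 = 0 \<and> b1 = 0 then (-3) \<cdot>\<^sub>v (K *\<^sub>v unit_vec n 0) + K *\<^sub>v unit_vec n s
     else ((-3 * b1) \<cdot>\<^sub>v (K *\<^sub>v unit_vec n 0) + (-24 * a2) \<cdot>\<^sub>v (K *\<^sub>v unit_vec n 1)) + (b1 \<cdot>\<^sub>v (K *\<^sub>v unit_vec n s) + (2 * a2) \<cdot>\<^sub>v (K *\<^sub>v unit_vec n (s+1))))"
    unfolding x_def by (simp add: mult_add_distrib_mat_vec[OF Kc] mult_mat_vec[OF Kc])
  have Kx: "(K *\<^sub>v x) $ i = c0 * K $$ (i,0) + c1 * K $$ (i,1) + c2 * K $$ (i,s) + c3 * K $$ (i,s+1)"
    if "i < n" for i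
    unfolding Kxv using that ns Kc colK unfolding x_def c0_def c1_def c2_def c3_def
    by (auto simp del: index_mult_mat_vec)
  have row0: "c0 * K $$ (i,0) + c1 * K $$ (i,1) + c2 * K $$ (i,s) + c3 * K $$ (i,s+1) = 0"
    if "i < n" for i
  proof -
    have e: "K $$ (i,0) = v $$ (i,0)" "K $$ (i,1) = v $$ (i,1)"
       "K $$ (i,s) = (Am n * v) $$ (i,0)" "K $$ (i,s+1) = (Am n * v) $$ (i,1)"
      using K1[OF that, of 0] K1[OF that, of 1] K2[OF that, of 0] K2[OF that, of 1] ns by auto
    have A0: "(Am n * v) $$ (i,0) = dd i * v$$(i,0) + (if i = 1 then - v$$(2,0) else 0) + (if i = 2 then 4 * v$$(1,0) else 0)"
      by (rule Am_mult_mat) (use n that v ns in auto)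
    have A1: "(Am n * v) $$ (i,1) = dd i * v$$(i,1) + (if i = 1 then - v$$(2,1) else 0) + (if i = 2 then 4 * v$$(1,1) else 0)"
      by (rule Am_mult_mat) (use n that v ns in auto)
    have z: "v $$ (0,1) = 0" "v $$ (1,1) = 0" "v $$ (2,0) = 0" "v $$ (3,0) = 0"
      using vz[of 0 1] vz[of 1 1] vz[of 2 0] vz[of 3 0] ns by auto
    have cs: "c0 = (if a2 = 0 \<and> b1 = 0 then -3 else -3 * b1)" "c1 = (if a2 = 0 \<and> b1 = 0 then 0 else -24 * a2)"
        "c2 = (if a2 = 0 \<and> b1 = 0 then 1 else b1)" "c3 = (if a2 = 0 \<and> b1 = 0 then 0 else 2 * a2)"
      unfolding c0_def c1_def c2_def c3_def x_def using ns by auto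
    consider "i = 0" | "i = 1" | "i = 2" | "i = 3" | "i \<ge> 4" by linarith
    then show ?thesis
    proof cases
      case 1 then show ?thesis unfolding e A0 A1 cs using z by (simp add: dd_def)
    next
      case 2 then show ?thesis unfolding e A0 A1 cs using z by (simp add: dd_def a2_def b1_def algebra_simps)
    next
      case 3 then show ?thesis unfolding e A0 A1 cs using z by (simp add: dd_def a2_def b1_def algebra_simps)
    next
      case 4 then show ?thesis unfolding e A0 A1 cs using z by (simp add: dd_def a2_def b1_def algebra_simps)
    next
      case 5
      then have "v $$ (i,0) = 0" "v $$ (i,1) = 0" using vz[OF that, of 0] vz[OF that, of 1] ns by auto
      then show ?thesis unfolding e A0 A1 using 5 by simp
    qed
  qed
  have "K *\<^sub>v x = 0\<^sub>v n"
    by (rule eq_vecI) (use Kc Kx row0 in auto)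
  then have "det K = 0" using det_0_iff_vec_prod_zero_field[OF Kc] xc xnz by blast
  then show ?thesis unfolding K_def .
qed

theorem mainTheorem1:
  fixes n :: nat
  assumes "even n" and "n \<ge> 4"
  shows "\<exists>A :: rat mat. A \<in> carrier_mat n n \<and> det A \<noteq> 0 \<and>
           card {k :: complex. eigenvalue (map_mat of_rat A) k} = n \<and>
           (\<forall>v \<in> carrier_mat n (n div 2). block_diag_sparse 2 v \<longrightarrow>
              det (block_krylov A v) = 0)"
proof (intro exI conjI ballI impI)
  show "Am n \<in> carrier_mat n n" by (rule Am_carrier)
  show "det (Am n :: rat mat) \<noteq> 0"
  proof
    assume "det (Am n :: rat mat) = 0"
    then obtain w :: "rat vec" where w: "w \<in> carrier_vec n" "w \<noteq> 0\<^sub>v n" "Am n *\<^sub>v w = 0\<^sub>v n"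
      using det_0_iff_vec_prod_zero_field[OF Am_carrier] by blast
    have "Am n *\<^sub>v w = 0 \<cdot>\<^sub>v w" using w by auto
    from eig_in[OF assms(2) w(1,2) this] have "(0::rat) \<in> S n" .
    then show False unfolding S_def by auto
  qed
  have mm: "map_mat of_rat (Am n :: rat mat) = (Am n :: complex mat)"
    by (rule eq_matI) (auto simp: Am_def dd_def of_rat_add)
  have "{k :: complex. eigenvalue (Am n) k} = S n"
  proof (intro equalityI subsetI)
    fix k :: complex assume "k \<in> {k. eigenvalue (Am n) k}"
    then obtain w where "eigenvector (Am n) w k" unfolding eigenvalue_def by auto
    then have "w \<in> carrier_vec n" "w \<noteq> 0\<^sub>v n" "Am n *\<^sub>v w = k \<cdot>\<^sub>v w"
      unfolding eigenvector_def by (auto simp: Am_def)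
    then show "k \<in> S n" using eig_in assms(2) by blast
  qed (use eig_ex assms(2) in auto)
  then show "card {k :: complex. eigenvalue (map_mat of_rat (Am n :: rat mat)) k} = n"
    unfolding mm using card_S assms(2) by simp
next
  fix v :: "rat mat" assume "v \<in> carrier_mat n (n div 2)" "block_diag_sparse 2 v"
  then show "det (block_krylov (Am n) v) = 0" using krylov_sing assms by blast
qed

end
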